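(* Let $L\in R[x][\partial]$ have positive order and let $k\in\mathbb{N}$ be such that $M_k(L)$ contains a desingularized operator for $L$. Let $s$ be a nonzero element of the $k$th coefficient ideal $I_k$ of minimal degree in $x$. Then every operator $S\in M_k(L)$ with $\mathrm{lc}_\partial(S)=s$ is a desingularized operator for $L$.
   Context: $R$ is a principal ideal domain with quotient field $Q_R$. $\sigma$ is an $R$-automorphism of $R[x]$ with $\sigma(x)=\gamma x+\tau$ ($\gamma,\tau\in R$, $\gamma$ a unit), and $\delta$ is an $R$-linear $\sigma$-derivation of $R[x]$ with $\delta(x)\in R[x]$ of degree at most $1$. $R[x][\partial]$ is the Ore algebra with $\partial p=\sigma(p)\partial+\delta(p)$, contained in $Q_R(x)[\partial]$. Order $\deg_\partial$ and leading coefficient $\mathrm{lc}_\partial$ are with respect to $\partial$. $\mathrm{cont}(L)=Q_R(x)[\partial]L\cap R[x][\partial]$; $M_k(L)=\{P\in\mathrm{cont}(L):\deg_\partial P\le k\}$; the $k$th coefficient ideal is $I_k=\{[\partial^k]P: P\in M_k(L)\}\cup\{0\}\subseteq R[x]$, where $[\partial^k]P$ is the coefficient of $\partial^k$ in $P$. Removability: for $p\in R[x]$ dividing $\mathrm{lc}_\partial(L)$, $p$ is removable from $L$ at order $k$ if there are $P\in Q_R(x)[\partial]$ of order $k$ and $w,v\in R[x]$ with $\gcd(p,w)=1$ in $R[x]$ such that $PL\in R[x][\partial]$ and $\sigma^{-k}(\mathrm{lc}_\partial(PL))=\frac{w}{vp}\mathrm{lc}_\partial(L)$; removable means removable at some order,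 non-removable otherwise. Desingularized operator: if $L$ has order $r>0$ and $\mathrm{lc}_\partial(L)=c\,p_1^{e_1}\cdots p_m^{e_m}$ with $c\in R$, $p_i\in R[x]\setminus R$ irreducible and pairwise coprime, then $T\in R[x][\partial]$ of order $k$ is desingularized for $L$ if $T\in\mathrm{cont}(L)$ and $\sigma^{r-k}(\mathrm{lc}_\partial(T))=\frac{a}{b\,p_1^{k_1}\cdots p_m^{k_m}}\mathrm{lc}_\partial(L)$ for some $a,b\in R$, $b\neq 0$, nonnegative integers $k_i$ such that $p_i^{d_i}$ is non-removable from $L$ for all integers $d_i>k_i$. *)

theory Defs
  imports "HOL-Computational_Algebra.Computational_Algebra"
begin

class pid = idom +
  assumes principal_ideal:
    "\<And>I :: 'a set. 0 \<in> I \<Longrightarrow> (\<forall>x\<in>I. \<forall>y\<in>I. x + y \<in> I) \<Longrightarrow>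
       (\<forall>x\<in>I. \<forall>r. r * x \<in> I) \<Longrightarrow> \<exists>g. I = range (\<lambda>r. g * r)"

text \<open>Q_R(x) is represented as the fraction field of R[x], i.e. type 'a poly fract.
  R[x] is embedded via to_fract; R is embedded via constant polynomials.
  Ore operators (elements of Q_R(x)[d]) are represented by their coefficient
  sequences, stored in the type ('a poly fract) poly; the coefficient of d^i
  is coeff P i.  The (noncommutative) Ore product is ore_mult below; the
  commutative product of the poly type is never used for operators.\<close>

definition sigmaR :: "'a::idom \<Rightarrow> 'a \<Rightarrow> 'a poly \<Rightarrow> 'a poly" where
  "sigmaR \<gamma> \<tau> p = pcompose p [:\<tau>, \<gamma>:]"

text \<open>The unique R-linear sigma-derivation with delta(x) = dx:
  delta(x^n) = sum_{i<n} sigma(x)^i * dx * x^(n-1-i).\<close>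
definition deltaR :: "'a::idom \<Rightarrow> 'a \<Rightarrow> 'a poly \<Rightarrow> 'a poly \<Rightarrow> 'a poly" where
  "deltaR \<gamma> \<tau> dx p =
     (\<Sum>n\<le>degree p. smult (coeff p n)
        (\<Sum>i<n. [:\<tau>, \<gamma>:] ^ i * dx * [:0, 1:] ^ (n - 1 - i)))"

definition sigmaK :: "'a::idom \<Rightarrow> 'a \<Rightarrow> 'a poly fract \<Rightarrow> 'a poly fract" where
  "sigmaK \<gamma> \<tau> q = (SOME r. \<exists>a b. b \<noteq> 0 \<and> q = Fraction_Field.Fract a b \<and>
        r = Fraction_Field.Fract (sigmaR \<gamma> \<tau> a) (sigmaR \<gamma> \<tau> b))"

definition deltaK :: "'a::idom \<Rightarrow> 'a \<Rightarrow> 'a poly \<Rightarrow> 'a poly fract \<Rightarrow> 'a poly fract" where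
  "deltaK \<gamma> \<tau> dx q = (SOME r. \<exists>a b. b \<noteq> 0 \<and> q = Fraction_Field.Fract a b \<and>
        r = Fraction_Field.Fract (deltaR \<gamma> \<tau> dx a * b - a * deltaR \<gamma> \<tau> dx b)
                                  (b * sigmaR \<gamma> \<tau> b))"

text \<open>Integer powers of sigma on Q_R(x) (sigma is an automorphism when gamma is a unit).\<close>
definition sigma_pow :: "'a::idom \<Rightarrow> 'a \<Rightarrow> int \<Rightarrow> 'a poly fract \<Rightarrow> 'a poly fract" where
  "sigma_pow \<gamma> \<tau> n = (if 0 \<le> n then sigmaK \<gamma> \<tau> ^^ nat n
                       else inv (sigmaK \<gamma> \<tau>) ^^ nat (- n))"

definition lmulD :: "'a::idom \<Rightarrow> 'a \<Rightarrow> 'a poly \<Rightarrow> 'a poly fract poly \<Rightarrow> 'a poly fract poly" where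
  "lmulD \<gamma> \<tau> dx P = pCons 0 (map_poly (sigmaK \<gamma> \<tau>) P) + map_poly (deltaK \<gamma> \<tau> dx) P"

definition ore_mult ::
  "'a::idom \<Rightarrow> 'a \<Rightarrow> 'a poly \<Rightarrow> 'a poly fract poly \<Rightarrow> 'a poly fract poly \<Rightarrow> 'a poly fract poly" where
  "ore_mult \<gamma> \<tau> dx P Q = (\<Sum>i\<le>degree P. smult (coeff P i) ((lmulD \<gamma> \<tau> dx ^^ i) Q))"

definition in_RxD :: "'a::idom poly fract poly \<Rightarrow> bool" where
  "in_RxD P \<longleftrightarrow> (\<forall>i. coeff P i \<in> range to_fract)"

definition cont :: "'a::idom \<Rightarrow> 'a \<Rightarrow> 'a poly \<Rightarrow> 'a poly fract poly \<Rightarrow> 'a poly fract poly set" where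
  "cont \<gamma> \<tau> dx L = {P. in_RxD P \<and> (\<exists>Q. P = ore_mult \<gamma> \<tau> dx Q L)}"

definition Mk :: "'a::idom \<Rightarrow> 'a \<Rightarrow> 'a poly \<Rightarrow> 'a poly fract poly \<Rightarrow> nat \<Rightarrow> 'a poly fract poly set" where
  "Mk \<gamma> \<tau> dx L k = {P \<in> cont \<gamma> \<tau> dx L. degree P \<le> k}"

definition coeff_ideal :: "'a::idom \<Rightarrow> 'a \<Rightarrow> 'a poly \<Rightarrow> 'a poly fract poly \<Rightarrow> nat \<Rightarrow> 'a poly set" where
  "coeff_ideal \<gamma> \<tau> dx L k = {p. \<exists>P \<in> Mk \<gamma> \<tau> dx L k. to_fract p = coeff P k} \<union> {0}"

text \<open>gcd(p,w)=1 is written out as: every common divisor is a unit.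
  p is removable from L at order k (p in R[x] must divide lc(L)).\<close>
definition removable_at ::
  "'a::idom \<Rightarrow> 'a \<Rightarrow> 'a poly \<Rightarrow> 'a poly fract poly \<Rightarrow> 'a poly \<Rightarrow> nat \<Rightarrow> bool" where
  "removable_at \<gamma> \<tau> dx L p k \<longleftrightarrow>
     (\<exists>q. lead_coeff L = to_fract (p * q)) \<and>
     (\<exists>P w v. P \<noteq> 0 \<and> degree P = k \<and> v \<noteq> 0 \<and> (\<forall>g. g dvd p \<longrightarrow> g dvd w \<longrightarrow> g dvd 1) \<and>
        in_RxD (ore_mult \<gamma> \<tau> dx P L) \<and>
        sigma_pow \<gamma> \<tau> (- int k) (lead_coeff (ore_mult \<gamma> \<tau> dx P L)) =
          to_fract w / (to_fract v * to_fract p) * lead_coeff L)"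

definition removable ::
  "'a::idom \<Rightarrow> 'a \<Rightarrow> 'a poly \<Rightarrow> 'a poly fract poly \<Rightarrow> 'a poly \<Rightarrow> bool" where
  "removable \<gamma> \<tau> dx L p \<longleftrightarrow> (\<exists>k. removable_at \<gamma> \<tau> dx L p k)"

definition lc_factorization ::
  "'a::idom poly fract poly \<Rightarrow> 'a \<Rightarrow> 'a poly set \<Rightarrow> ('a poly \<Rightarrow> nat) \<Rightarrow> bool" where
  "lc_factorization L c Ps e \<longleftrightarrow>
     finite Ps \<and> (\<forall>p\<in>Ps. irreducible p \<and> degree p > 0 \<and> e p > 0) \<and>
     (\<forall>p\<in>Ps. \<forall>q\<in>Ps. p \<noteq> q \<longrightarrow> (\<forall>g. g dvd p \<longrightarrow> g dvd q \<longrightarrow> g dvd 1)) \<and>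
     lead_coeff L = to_fract ([:c:] * (\<Prod>p\<in>Ps. p ^ e p))"

text \<open>T is a desingularized operator for L (L of order r, T of order k).
  The factorization of lc(L) is unique up to units and order, so we quantify
  over all such factorizations.\<close>
definition desingularized ::
  "'a::idom \<Rightarrow> 'a \<Rightarrow> 'a poly \<Rightarrow> 'a poly fract poly \<Rightarrow> 'a poly fract poly \<Rightarrow> bool" where
  "desingularized \<gamma> \<tau> dx L T \<longleftrightarrow>
     T \<noteq> 0 \<and> T \<in> cont \<gamma> \<tau> dx L \<and>
     (\<forall>c Ps e. lc_factorization L c Ps e \<longrightarrow>
        (\<exists>a b kk. b \<noteq> 0 \<and>
           sigma_pow \<gamma> \<tau> (int (degree L) - int (degree T)) (lead_coeff T) =
             to_fract [:a:] / (to_fract [:b:] * to_fract (\<Prod>p\<in>Ps. p ^ kk p)) * lead_coeff L \<and>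
           (\<forall>p\<in>Ps. \<forall>d. d > kk p \<longrightarrow> \<not> removable \<gamma> \<tau> dx L (p ^ d))))"

end

theory Submission
  imports Defs
begin


lemma pid_wf: "wf {(a::'a::pid, b). b \<noteq> 0 \<and> a dvd b \<and> \<not> b dvd a}"
proof (rule ccontr)
  assume "\<not> ?thesis"
  then obtain f where f: "\<And>i. (f (Suc i), f i) \<in> {(a::'a, b). b \<noteq> 0 \<and> a dvd b \<and> \<not> b dvd a}"
    unfolding wf_iff_no_infinite_down_chain by blast
  have mono: "f j dvd f i" if "i \<le> j" for i j
    using that
  proof (induction j)
    case 0 then show ?case by simp
  next
    case (Suc j)
    show ?case
    proof (cases "i = Suc j")
      case False
      with Suc have "f j dvd f i" by simp
      moreover have "f (Suc j) dvd f j" using f[of j] by simp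
      ultimately show ?thesis by (rule dvd_trans[rotated])
    qed simp
  qed
  define I where "I = {x. \<exists>n. f n dvd x}"
  have "0 \<in> I" unfolding I_def by auto
  moreover have "\<forall>x\<in>I. \<forall>y\<in>I. x + y \<in> I"
  proof (intro ballI)
    fix x y assume "x \<in> I" "y \<in> I"
    then obtain n m where "f n dvd x" "f m dvd y" unfolding I_def by auto
    then have "f (max n m) dvd x" "f (max n m) dvd y"
      using mono[of n "max n m"] mono[of m "max n m"] by (auto intro: dvd_trans)
    then have "f (max n m) dvd x + y" by (rule dvd_add)
    then show "x + y \<in> I" unfolding I_def by blast
  qed
  moreover have "\<forall>x\<in>I. \<forall>r. r * x \<in> I"
  proof (intro ballI allI)
    fix x r assume "x \<in> I"
    then obtain n where "f n dvd x" unfolding I_def by auto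
    then have "f n dvd r * x" by (rule dvd_mult)
    then show "r * x \<in> I" unfolding I_def by blast
  qed
  ultimately obtain g where g: "I = range (\<lambda>r. g * r)" using principal_ideal by blast
  have "g \<in> I" unfolding g by (auto intro: exI[of _ 1])
  then obtain N where N: "f N dvd g" unfolding I_def by auto
  have "f (Suc N) dvd f (Suc N)" by simp
  then have "f (Suc N) \<in> I" unfolding I_def by blast
  then have "g dvd f (Suc N)" unfolding g by auto
  with N have "f N dvd f (Suc N)" by (rule dvd_trans)
  with f[of N] show False by simp
qed

lemma pid_irred_prime:
  fixes p :: "'a::pid"
  assumes irr: "irreducible p"
  shows "prime_elem p"
proof (rule prime_elemI)
  show "p \<noteq> 0" "\<not> p dvd 1" using irr by (auto simp: irreducible_def)
  fix a b assume ab: "p dvd a * b"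
  show "p dvd a \<or> p dvd b"
  proof (cases "p dvd a")
    case na: False
    define I where "I = {p * x + a * y | x y. True}"
    have "0 = p * 0 + a * 0" by simp
    then have "0 \<in> I" unfolding I_def by blast
    moreover have "\<forall>x\<in>I. \<forall>y\<in>I. x + y \<in> I"
    proof (intro ballI)
      fix u v assume "u \<in> I" "v \<in> I"
      then obtain x1 y1 x2 y2 where "u = p * x1 + a * y1" "v = p * x2 + a * y2"
        unfolding I_def by blast
      then have "u + v = p * (x1 + x2) + a * (y1 + y2)" by (simp add: algebra_simps)
      then show "u + v \<in> I" unfolding I_def by blast
    qed
    moreover have "\<forall>x\<in>I. \<forall>r. r * x \<in> I"
    proof (intro ballI allI)
      fix u r assume "u \<in> I"
      then obtain x1 y1 where "u = p * x1 + a * y1" unfolding I_def by blast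
      then have "r * u = p * (r * x1) + a * (r * y1)" by (simp add: algebra_simps)
      then show "r * u \<in> I" unfolding I_def by blast
    qed
    ultimately have "\<exists>g. I = range (\<lambda>r. g * r)" by (rule principal_ideal)
    then obtain g where g: "I = range (\<lambda>r. g * r)" by blast
    have "p = p * 1 + a * 0" by simp
    then have "p \<in> I" unfolding I_def by blast
    then obtain r where r: "p = g * r" unfolding g by auto
    have "a = p * 0 + a * 1" by simp
    then have "a \<in> I" unfolding I_def by blast
    then have ga: "g dvd a" unfolding g by auto
    have "g dvd 1"
    proof -
      from irreducibleD[OF irr r] have "g dvd 1 \<or> r dvd 1" .
      moreover have "\<not> r dvd 1"
      proof
        assume "r dvd 1"
        then obtain h where "1 = r * h" unfolding dvd_def by blast
        then have "g = p * h" using r by (metis mult.assoc mult_1_right)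
        then have "p dvd g" by simp
        with ga na show False by (meson dvd_trans)
      qed
      ultimately show ?thesis by blast
    qed
    have "g \<in> range (\<lambda>r. g * r)" by (rule range_eqI[of _ _ 1]) simp
    then have "g \<in> I" unfolding g .
    then obtain x y where gxy: "g = p * x + a * y" unfolding I_def by blast
    have bg: "b * g = p * (b * x) + (a * b) * y" by (simp add: gxy algebra_simps)
    have "p dvd p * (b * x) + (a * b) * y" using ab by (intro dvd_add) auto
    then have "p dvd b * g" unfolding bg .
    then have "\<And>h. p dvd b * g * h" by (rule dvd_mult2)
    then have "p dvd b" using \<open>g dvd 1\<close> unfolding dvd_def by (metis mult.assoc mult_1_right)
    then show ?thesis by simp
  qed simp
qed

lemma strict_dvd_lemma:
  fixes x a b :: "'a::idom"
  assumes "x = a * b" "x \<noteq> 0" "\<not> b dvd 1"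
  shows "\<not> x dvd a"
proof
  assume "x dvd a" then obtain c where "a = x * c" by auto
  with assms have "x = x * (c * b)" by (simp add: mult.assoc mult.commute mult.left_commute)
  then have "c * b = 1" using assms(2) by (metis mult_cancel_left1)
  with assms show False by (metis dvd_triv_right)
qed

lemma pid_irred_factor:
  fixes x :: "'a::pid"
  assumes "x \<noteq> 0" "\<not> x dvd 1"
  shows "\<exists>q y. irreducible q \<and> x = q * y"
  using assms
proof (induction x rule: wf_induct_rule[OF pid_wf])
  case (1 x)
  show ?case
  proof (cases "irreducible x")
    case True
    then show ?thesis by (intro exI[of _ x] exI[of _ 1]) simp
  next
    case False
    with 1(2,3) obtain a b where ab: "x = a * b" "\<not> a dvd 1" "\<not> b dvd 1"
      by (auto simp: irreducible_def)
    have a0: "a \<noteq> 0" using ab 1(2) by auto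
    have "\<not> x dvd a" by (rule strict_dvd_lemma[OF ab(1) 1(2) ab(3)])
    then have "(a, x) \<in> {(a, b). b \<noteq> 0 \<and> a dvd b \<and> \<not> b dvd a}" using ab 1(2) by auto
    then obtain q y where "irreducible q" "a = q * y" using 1(1)[of a] ab a0 by blast
    then show ?thesis using ab by (intro exI[of _ q] exI[of _ "y * b"]) (simp add: mult.assoc)
  qed
qed

lemma pid_induct [consumes 1, case_names unit irred]:
  fixes x :: "'a::pid"
  assumes "x \<noteq> 0"
    and U: "\<And>u. u dvd 1 \<Longrightarrow> P u"
    and S: "\<And>q y. irreducible q \<Longrightarrow> y \<noteq> 0 \<Longrightarrow> P y \<Longrightarrow> P (q * y)"
  shows "P x"
  using assms(1)
proof (induction x rule: wf_induct_rule[OF pid_wf])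
  case (1 x)
  show ?case
  proof (cases "x dvd 1")
    case True then show ?thesis by (rule U)
  next
    case nu: False
    then obtain q y where qy: "irreducible q" "x = q * y" using pid_irred_factor 1(2) by blast
    have y0: "y \<noteq> 0" using qy 1(2) by auto
    have "\<not> x dvd y" using strict_dvd_lemma[of x y q] qy 1(2)
      by (simp add: mult.commute irreducible_def)
    then have "P y" using 1 qy y0 by auto
    then show ?thesis using S qy y0 by simp
  qed
qed


lemma cdvd_pCons: "[:c:] dvd pCons a p \<longleftrightarrow> c dvd a \<and> [:c:] dvd p"
  for c :: "'a::idom"
  unfolding const_poly_dvd_iff
  by (auto simp: coeff_pCons split: nat.splits)

lemma const_dvd_smult: "c dvd a \<Longrightarrow> [:c:] dvd smult a g"
  for c :: "'a::idom"
  unfolding const_poly_dvd_iff by auto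

lemma const_prime_poly:
  fixes c :: "'a::idom"
  assumes pr: "prime_elem c"
  shows "[:c:] dvd f * g \<Longrightarrow> [:c:] dvd f \<or> [:c:] dvd g"
proof (induction f arbitrary: g)
  case 0 then show ?case by simp
next
  case (pCons a f)
  show ?case
  proof (cases "c dvd a")
    case True
    have "[:c:] dvd smult a g" using True by (rule const_dvd_smult)
    moreover have "[:c:] dvd smult a g + pCons 0 (f * g)" using pCons.prems by simp
    ultimately have "[:c:] dvd pCons 0 (f * g)" by (rule dvd_add_right_iff[THEN iffD1])
    then have "[:c:] dvd f * g" by (simp add: cdvd_pCons)
    then have "[:c:] dvd f \<or> [:c:] dvd g" by (rule pCons.IH)
    then show ?thesis using True by (auto simp: cdvd_pCons)
  next
    case False
    have "[:c:] dvd g" if "[:c:] dvd pCons a f * g" for g using that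
    proof (induction g)
      case 0 then show ?case by simp
    next
      case (pCons b g)
      have "c dvd coeff (pCons a f * pCons b g) 0" using pCons.prems
        unfolding const_poly_dvd_iff by blast
      then have "c dvd a * b" by (simp add: coeff_mult_0 mult.commute)
      with pr False have cb: "c dvd b" by (auto dest: prime_elem_dvd_multD)
      have "[:c:] dvd smult b (pCons a f)" using cb by (rule const_dvd_smult)
      moreover have "[:c:] dvd smult b (pCons a f) + pCons 0 (pCons a f * g)"
        using pCons.prems by (simp only: mult_pCons_right)
      ultimately have "[:c:] dvd pCons 0 (pCons a f * g)" by (rule dvd_add_right_iff[THEN iffD1])
      then have "[:c:] dvd pCons a f * g" by (simp add: cdvd_pCons)
      then have "[:c:] dvd g" by (rule pCons.IH)
      then show ?case using cb by (simp add: cdvd_pCons)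
    qed
    then show ?thesis using pCons.prems by blast
  qed
qed

lemma const_prime_poly':
  fixes c :: "'a::idom"
  assumes "prime_elem c"
  shows "prime_elem [:c:]"
proof (rule prime_elemI)
  show "[:c:] \<noteq> 0" using assms by auto
  show "\<not> [:c:] dvd 1" using assms by (simp add: is_unit_const_poly_iff prime_elem_def)
qed (rule const_prime_poly[OF assms])

context
  fixes p :: "'a::pid poly"
  assumes irr: "irreducible p" and degp: "degree p > 0"
begin

lemma irr_const_dvd: "[:\<mu>:] dvd p \<Longrightarrow> \<mu> dvd 1"
proof -
  assume "[:\<mu>:] dvd p"
  then obtain q where q: "p = [:\<mu>:] * q" by auto
  from irreducibleD[OF irr q] have "[:\<mu>:] dvd 1 \<or> q dvd 1" .
  moreover have "\<not> q dvd 1"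
  proof
    assume "q dvd 1"
    then obtain c where "q = [:c:]" by (auto simp: is_unit_poly_iff)
    with q degp show False by simp
  qed
  ultimately show "\<mu> dvd 1" by (simp add: is_unit_const_poly_iff)
qed

lemma irr_dvd_cancel_const:
  assumes "\<mu> \<noteq> 0"
  shows "p dvd [:\<mu>:] * g \<Longrightarrow> p dvd g"
  using assms
proof (induction \<mu> arbitrary: g rule: pid_induct)
  case (unit u)
  then obtain v where uv: "1 = u * v" by auto
  have "p dvd [:u:] * g * [:v:]" using unit by (simp del: mult_pCons_left mult_pCons_right)
  also have "[:u:] * g * [:v:] = g" using uv
    by (simp add: mult.commute)
  finally show ?case .
next
  case (irred q y)
  have "[:q * y:] = [:q:] * [:y:]" by simp
  with irred.prems obtain z where z: "p * z = [:q:] * ([:y:] * g)"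
    by (metis dvd_def mult.assoc)
  have pq: "prime_elem [:q:]" using pid_irred_prime[OF irred(1)] by (rule const_prime_poly')
  have "[:q:] dvd p * z" unfolding z by (rule dvd_triv_left)
  then have "[:q:] dvd p \<or> [:q:] dvd z" using pq by (simp add: prime_elem_dvd_mult_iff)
  moreover have "\<not> [:q:] dvd p" using irr_const_dvd irred(1) by (auto simp: irreducible_def)
  ultimately obtain z' where "z = [:q:] * z'" by auto
  with z have "[:q:] * (p * z') = [:q:] * ([:y:] * g)" by (simp add: mult.left_commute)
  moreover have "[:q:] \<noteq> 0" using irred(1) by (simp add: irreducible_def)
  ultimately have "p * z' = [:y:] * g" using mult_left_cancel by blast
  then have "p dvd [:y:] * g" by (metis dvd_triv_left)
  then show ?case by (rule irred.IH)
qed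

lemma irr_split_const:
  assumes "\<mu> \<noteq> 0"
  shows "[:\<mu>:] * p = m * q \<Longrightarrow> degree m = 0 \<or> degree q = 0"
  using assms
proof (induction \<mu> arbitrary: m q rule: pid_induct)
  case (unit u)
  then obtain v where uv: "1 = u * v" by auto
  have "p = [:v:] * ([:u:] * p)" using uv by (simp add: mult.commute)
  also have "\<dots> = ([:v:] * m) * q" using unit by (simp only: mult.assoc)
  finally have "[:v:] * m dvd 1 \<or> q dvd 1" by (rule irreducibleD[OF irr])
  moreover have "v \<noteq> 0" using uv by auto
  ultimately show ?case by (auto simp: is_unit_poly_iff dest!: arg_cong[of _ _ degree])
next
  case (irred c y)
  have pq: "prime_elem [:c:]" using pid_irred_prime[OF irred(1)] by (rule const_prime_poly')
  have cz: "[:c:] \<noteq> 0" using irred(1) by (simp add: irreducible_def)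
  have e: "[:c:] * ([:y:] * p) = m * q" using irred.prems by (simp add: mult.assoc mult.commute)
  then have "[:c:] dvd m * q" by (metis dvd_triv_left)
  then have "[:c:] dvd m \<or> [:c:] dvd q" using pq by (simp add: prime_elem_dvd_mult_iff)
  then show ?case
  proof
    assume "[:c:] dvd m"
    then obtain m' where m': "m = [:c:] * m'" by auto
    with e have "[:c:] * ([:y:] * p) = [:c:] * (m' * q)" by (simp add: mult.assoc)
    then have "[:y:] * p = m' * q" using cz mult_left_cancel by blast
    then have "degree m' = 0 \<or> degree q = 0" by (rule irred.IH)
    then show ?thesis using m' cz by (auto simp: degree_mult_eq)
  next
    assume "[:c:] dvd q"
    then obtain q' where q': "q = [:c:] * q'" by auto
    with e have "[:c:] * ([:y:] * p) = [:c:] * (m * q')" by (simp add: mult.left_commute)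
    then have "[:y:] * p = m * q'" using cz mult_left_cancel by blast
    then have "degree m = 0 \<or> degree q' = 0" by (rule irred.IH)
    then show ?thesis using q' cz by auto
  qed
qed
lemma irr_prime_poly: "prime_elem p"
proof (rule prime_elemI)
  show "p \<noteq> 0" "\<not> p dvd 1" using irr by (auto simp: irreducible_def)
  fix f g assume pfg: "p dvd f * g"
  show "p dvd f \<or> p dvd g"
  proof (cases "p dvd f")
    case nf: False
    define I where "I = {a * p + b * f | a b. True}"
    have Iadd: "u + v \<in> I" if "u \<in> I" "v \<in> I" for u v
    proof -
      from that obtain a1 b1 a2 b2 where "u = a1 * p + b1 * f" "v = a2 * p + b2 * f"
        unfolding I_def by blast
      then have "u + v = (a1 + a2) * p + (b1 + b2) * f" by (simp add: algebra_simps)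
      then show ?thesis unfolding I_def by blast
    qed
    have Imult: "r * u \<in> I" if "u \<in> I" for u r
    proof -
      from that obtain a1 b1 where "u = a1 * p + b1 * f" unfolding I_def by blast
      then have "r * u = (r * a1) * p + (r * b1) * f" by (simp add: algebra_simps)
      then show ?thesis unfolding I_def by blast
    qed
    have Iuminus: "- u \<in> I" if "u \<in> I" for u using Imult[OF that, of "-1"] by simp
    have pI: "p \<in> I" unfolding I_def by (rule CollectI, rule exI[of _ 1], rule exI[of _ 0]) simp
    have fI: "f \<in> I" unfolding I_def by (rule CollectI, rule exI[of _ 0], rule exI[of _ 1]) simp
    define Q where "Q = (\<lambda>n. \<exists>m\<in>I. m \<noteq> 0 \<and> degree m = n)"
    have "Q (degree p)" unfolding Q_def using pI \<open>p \<noteq> 0\<close> by blast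
    then have "Q (LEAST n. Q n)" by (rule LeastI)
    then obtain m where mI: "m \<in> I" and m0: "m \<noteq> 0" and mdeg: "degree m = (LEAST n. Q n)"
      unfolding Q_def by blast
    have mdvd: "\<exists>\<alpha> q. \<alpha> \<noteq> 0 \<and> smult \<alpha> h = m * q" if hI: "h \<in> I" for h
    proof -
      define r where "r = pseudo_mod h m"
      obtain \<alpha> q where aq: "\<alpha> \<noteq> 0" "smult \<alpha> h = m * q + r"
        using pseudo_mod(1)[OF m0, of h] unfolding r_def by blast
      have rdeg: "r = 0 \<or> degree r < degree m" using pseudo_mod(2)[OF m0, of h] unfolding r_def by blast
      have "r = smult \<alpha> h + - (q * m)" using aq by (simp add: algebra_simps)
      moreover have "smult \<alpha> h \<in> I" using Imult[OF hI, of "[:\<alpha>:]"] by simp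
      moreover have "- (q * m) \<in> I" using Iuminus[OF Imult[OF mI]] .
      ultimately have rI: "r \<in> I" using Iadd by metis
      have "r = 0"
      proof (rule ccontr)
        assume "r \<noteq> 0"
        then have "Q (degree r)" unfolding Q_def using rI by blast
        then have "(LEAST n. Q n) \<le> degree r" by (rule Least_le)
        with rdeg \<open>r \<noteq> 0\<close> mdeg show False by simp
      qed
      with aq show ?thesis by auto
    qed
    from mI obtain a b where mab: "m = a * p + b * f" unfolding I_def by blast
    show ?thesis
    proof (cases "degree m = 0")
      case True
      then obtain \<mu> where mu: "m = [:\<mu>:]" by (metis degree_0_id)
      with m0 have mu0: "\<mu> \<noteq> 0" by simp
      have "[:\<mu>:] * g = p * (a * g) + b * (f * g)" using mab mu by (simp add: algebra_simps)
      moreover have "p dvd p * (a * g) + b * (f * g)" using pfg by (intro dvd_add) auto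
      ultimately have "p dvd [:\<mu>:] * g" by simp
      then have "p dvd g" by (rule irr_dvd_cancel_const[OF mu0])
      then show ?thesis by simp
    next
      case False
      obtain \<alpha> q where aq: "\<alpha> \<noteq> 0" "smult \<alpha> p = m * q" using mdvd[OF pI] by blast
      then have "[:\<alpha>:] * p = m * q" by simp
      then have "degree m = 0 \<or> degree q = 0" by (rule irr_split_const[OF aq(1)])
      then have "degree q = 0" using False by simp
      then obtain \<kappa> where kq: "q = [:\<kappa>:]" by (metis degree_0_id)
      obtain \<beta> w where bw: "\<beta> \<noteq> 0" "smult \<beta> f = m * w" using mdvd[OF fI] by blast
      have "[:\<kappa> * \<beta>:] * f = smult \<kappa> (smult \<beta> f)" by simp
      also have "\<dots> = m * q * w" using bw kq by (simp add: algebra_simps)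
      also have "\<dots> = (smult \<alpha> p) * w" using aq(2) by simp
      also have "\<dots> = p * ([:\<alpha>:] * w)" by simp
      finally have "p dvd [:\<kappa> * \<beta>:] * f" by (metis dvd_triv_left)
      moreover have "\<kappa> \<noteq> 0" using kq aq m0 \<open>p \<noteq> 0\<close> by auto
      then have "\<kappa> * \<beta> \<noteq> 0" using bw(1) by simp
      ultimately have "p dvd f" using irr_dvd_cancel_const by blast
      with nf show ?thesis by simp
    qed
  qed simp
qed

end


definition cop :: "'a::comm_semiring_1 \<Rightarrow> 'a \<Rightarrow> bool" where
  "cop p q \<longleftrightarrow> (\<forall>g. g dvd p \<longrightarrow> g dvd q \<longrightarrow> g dvd 1)"

lemma prime_not_dvd_prod:
  fixes p :: "'a::idom poly"
  assumes pp: "prime_elem p" and dp: "degree p > 0" and C: "C \<noteq> 0"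
    and fin: "finite A" and nd: "\<forall>q\<in>A. \<not> p dvd q"
  shows "\<not> p dvd [:C:] * (\<Prod>q\<in>A. q ^ m q)"
  using fin nd
proof (induction A rule: finite_induct)
  case empty
  show ?case
  proof
    assume "p dvd [:C:] * (\<Prod>q\<in>{}. q ^ m q)"
    then have "p dvd [:C:]" by simp
    then have "degree p \<le> degree [:C:]" using C by (intro dvd_imp_degree_le) auto
    with dp show False by simp
  qed
next
  case (insert q A)
  show ?case
  proof
    assume "p dvd [:C:] * (\<Prod>q\<in>insert q A. q ^ m q)"
    then have "p dvd q ^ m q * ([:C:] * (\<Prod>q\<in>A. q ^ m q))"
      using insert(1,2) by (simp add: mult.left_commute)
    then have "p dvd q ^ m q \<or> p dvd [:C:] * (\<Prod>q\<in>A. q ^ m q)"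
      by (rule prime_elem_dvd_multD[OF pp])
    then show False using insert pp by (auto dest: prime_elem_dvd_power)
  qed
qed

lemma cancel_prime:
  fixes d :: "'a::idom"
  assumes "prime_elem q" "\<not> q dvd d" "d dvd q * Y"
  shows "d dvd Y"
proof -
  from assms(3) obtain z where z: "q * Y = d * z" by auto
  then have "q dvd d * z" by (metis dvd_triv_left)
  with assms(1,2) have "q dvd z" by (simp add: prime_elem_dvd_mult_iff)
  then obtain z' where "z = q * z'" by auto
  with z have "q * Y = q * (d * z')" by (simp add: mult.left_commute)
  moreover have "q \<noteq> 0" using assms(1) by (simp add: prime_elem_def)
  ultimately have "Y = d * z'" using mult_left_cancel by blast
  then show ?thesis by simp
qed

lemma cancel_prime_pow:
  fixes d :: "'a::idom"
  assumes "prime_elem q" "\<not> q dvd d"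
  shows "d dvd q ^ k * Y \<Longrightarrow> d dvd Y"
proof (induction k)
  case (Suc k)
  then have "d dvd q * (q ^ k * Y)" by (simp add: mult.assoc)
  then have "d dvd q ^ k * Y" by (rule cancel_prime[OF assms])
  then show ?case by (rule Suc.IH)
qed simp

lemma cancel_prime_prod:
  fixes d :: "'a::idom"
  assumes fin: "finite A" and pr: "\<forall>q\<in>A. prime_elem q \<and> \<not> q dvd d"
  shows "d dvd X * (\<Prod>q\<in>A. q ^ m q) \<Longrightarrow> d dvd X"
  using fin pr
proof (induction A arbitrary: X rule: finite_induct)
  case (insert q A)
  then have "d dvd q ^ m q * (X * (\<Prod>q\<in>A. q ^ m q))" by (simp only: prod.insert[OF insert(1,2)] mult.left_commute)
  moreover have "prime_elem q" "\<not> q dvd d" using insert.prems by auto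
  ultimately have "d dvd X * (\<Prod>q\<in>A. q ^ m q)" using cancel_prime_pow by blast
  then show ?case using insert by blast
qed simp

context
  fixes Ps :: "'a::idom poly set"
  assumes fin: "finite Ps"
    and pr: "\<forall>p\<in>Ps. prime_elem p \<and> degree p > 0"
    and copr: "\<forall>p\<in>Ps. \<forall>q\<in>Ps. p \<noteq> q \<longrightarrow> cop p q"
begin

lemma ndvd_other: "p \<in> Ps \<Longrightarrow> q \<in> Ps \<Longrightarrow> p \<noteq> q \<Longrightarrow> \<not> p dvd q"
  using copr pr unfolding cop_def by (auto simp: prime_elem_def)

lemma ndvd_rest:
  assumes "p \<in> Ps" "C \<noteq> 0"
  shows "\<not> p dvd [:C:] * (\<Prod>q\<in>Ps - {p}. q ^ m q)"
  using assms pr fin ndvd_other by (intro prime_not_dvd_prod) auto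

lemma prod_split: "p \<in> Ps \<Longrightarrow> (\<Prod>q\<in>Ps. q ^ m q) = p ^ m p * (\<Prod>q\<in>Ps - {p}. q ^ m q)"
  using fin by (rule prod.remove)

lemma pow_bound:
  assumes p: "p \<in> Ps" and C: "C \<noteq> 0" and dv: "p ^ n dvd [:C:] * (\<Prod>q\<in>Ps. q ^ m q)"
  shows "n \<le> m p"
proof (rule ccontr)
  assume "\<not> n \<le> m p"
  then have n: "n = m p + Suc (n - m p - 1)" by simp
  have p0: "p \<noteq> 0" using pr p by (auto simp: prime_elem_def)
  from dv obtain z where z: "[:C:] * (\<Prod>q\<in>Ps. q ^ m q) = p ^ n * z" by auto
  have "p ^ m p * ([:C:] * (\<Prod>q\<in>Ps - {p}. q ^ m q)) = p ^ m p * (p * (p ^ (n - m p - 1) * z))"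
    using z unfolding prod_split[OF p]
    by (subst (asm) n) (simp add: power_add mult.assoc mult.left_commute)
  then have "[:C:] * (\<Prod>q\<in>Ps - {p}. q ^ m q) = p * (p ^ (n - m p - 1) * z)"
    by (rule mult_left_cancel[THEN iffD1, rotated]) (use p0 in simp)
  then have "p dvd [:C:] * (\<Prod>q\<in>Ps - {p}. q ^ m q)" by (metis dvd_triv_left)
  with ndvd_rest[OF p C] show False by blast
qed

lemma prod_shift:
  assumes p: "p \<in> Ps"
  shows "(\<Prod>q\<in>Ps. q ^ (m(p := Suc k)) q) = p * (\<Prod>q\<in>Ps. q ^ (m(p := k)) q)"
proof -
  have "(\<Prod>q\<in>Ps - {p}. q ^ (m(p := Suc k)) q) = (\<Prod>q\<in>Ps - {p}. q ^ (m(p := k)) q)"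
    by (rule prod.cong) auto
  then show ?thesis unfolding prod_split[OF p] by simp
qed

lemma prod_nonzero: "(\<Prod>q\<in>Ps. q ^ m q) \<noteq> 0"
  using pr fin by (auto simp: prime_elem_def)

lemma divisor_form:
  assumes C: "C \<noteq> 0"
  shows "d dvd [:C:] * (\<Prod>q\<in>Ps. q ^ m q) \<Longrightarrow>
    \<exists>u f. u \<noteq> 0 \<and> d = [:u:] * (\<Prod>q\<in>Ps. q ^ f q) \<and> (\<forall>q\<in>Ps. f q \<le> m q)"
proof (induction "degree d" arbitrary: d m rule: less_induct)
  case less
  have R0: "[:C:] * (\<Prod>q\<in>Ps. q ^ m q) \<noteq> 0" using C prod_nonzero by simp
  then have d0: "d \<noteq> 0" using less.prems by auto
  show ?case
  proof (cases "\<exists>p\<in>Ps. p dvd d")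
    case True
    then obtain p d1 where p: "p \<in> Ps" and d: "d = p * d1" by blast
    have p0: "p \<noteq> 0" using pr p by (auto simp: prime_elem_def)
    have d10: "d1 \<noteq> 0" using d d0 by auto
    have "degree d = degree p + degree d1" using d p0 d10 by (simp add: degree_mult_eq)
    then have dlt: "degree d1 < degree d" using pr p by auto
    have "p ^ 1 dvd [:C:] * (\<Prod>q\<in>Ps. q ^ m q)" using less.prems d by (auto intro: dvd_trans)
    then have m1: "1 \<le> m p" by (rule pow_bound[OF p C])
    define m' where "m' = m(p := m p - 1)"
    have mm: "m = m'(p := Suc (m p - 1))" using m1 unfolding m'_def by auto
    have pe: "(\<Prod>q\<in>Ps. q ^ m q) = p * (\<Prod>q\<in>Ps. q ^ m' q)"
      using prod_shift[OF p, of m' "m p - 1"] unfolding mm[symmetric] by (simp add: m'_def)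
    from less.prems obtain z where z: "[:C:] * (\<Prod>q\<in>Ps. q ^ m q) = d * z" by auto
    then have "p * ([:C:] * (\<Prod>q\<in>Ps. q ^ m' q)) = p * (d1 * z)"
      unfolding pe d by (simp only: mult.assoc mult.left_commute)
    then have "[:C:] * (\<Prod>q\<in>Ps. q ^ m' q) = d1 * z"
      by (rule mult_left_cancel[THEN iffD1, rotated]) (use p0 in simp)
    then have "d1 dvd [:C:] * (\<Prod>q\<in>Ps. q ^ m' q)" by simp
    from less.hyps[OF dlt this] obtain u f where
      uf: "u \<noteq> 0" "d1 = [:u:] * (\<Prod>q\<in>Ps. q ^ f q)" "\<forall>q\<in>Ps. f q \<le> m' q" by blast
    define f' where "f' = f(p := Suc (f p))"
    have "(\<Prod>q\<in>Ps. q ^ f' q) = p * (\<Prod>q\<in>Ps. q ^ f q)"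
      using prod_shift[OF p, of f "f p"] unfolding f'_def by simp
    then have "d = [:u:] * (\<Prod>q\<in>Ps. q ^ f' q)" using d uf(2) by (simp only: mult.left_commute)
    moreover have "\<forall>q\<in>Ps. f' q \<le> m q" using uf(3) m1 unfolding f'_def m'_def by auto
    ultimately show ?thesis using uf(1) by blast
  next
    case False
    then have "d dvd [:C:]" using pr
      by (intro cancel_prime_prod[OF fin _ less.prems]) auto
    then have "degree d = 0" using dvd_imp_degree_le[of d "[:C:]"] C by simp
    then have "d = [:coeff d 0:]" by (metis degree_0_id)
    moreover have "coeff d 0 \<noteq> 0" using d0 calculation by auto
    ultimately show ?thesis by (intro exI[of _ "coeff d 0"] exI[of _ "\<lambda>_. 0"]) simp
  qed
qed

end


section \<open>sigma on R[x]\<close>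

lemma sigmaR_add: "sigmaR g t (p + q) = sigmaR g t p + sigmaR g t q"
  by (simp add: sigmaR_def pcompose_add)
lemma sigmaR_mult: "sigmaR g t (p * q) = sigmaR g t p * sigmaR g t q"
  by (simp add: sigmaR_def pcompose_mult)
lemma sigmaR_const [simp]: "sigmaR g t [:c:] = [:c:]"
  by (simp add: sigmaR_def)
lemma sigmaR_0 [simp]: "sigmaR g t 0 = 0"
  by (simp add: sigmaR_def)
lemma sigmaR_1 [simp]: "sigmaR g t 1 = 1"
  by (simp add: sigmaR_def pcompose_1)
lemma sigmaR_minus: "sigmaR g t (p - q) = sigmaR g t p - sigmaR g t q"
  by (simp add: sigmaR_def pcompose_diff)
lemma sigmaR_smult: "sigmaR g t (smult c p) = smult c (sigmaR g t p)"
  by (simp add: sigmaR_def pcompose_smult)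
lemma sigmaR_X: "sigmaR g t [:0, 1:] = [:t, g:]"
  by (simp add: sigmaR_def pcompose_pCons)
lemma sigmaR_pow: "sigmaR g t (p ^ n) = sigmaR g t p ^ n"
  by (induction n) (simp_all add: sigmaR_mult)

lemma sigmaR_degree:
  fixes g t :: "'a::idom"
  assumes "g \<noteq> 0"
  shows "degree (sigmaR g t p) = degree p"
  using assms by (simp add: sigmaR_def degree_pcompose)

lemma sigmaR_eq_0_iff:
  fixes g t :: "'a::idom"
  assumes "g \<noteq> 0"
  shows "sigmaR g t p = 0 \<longleftrightarrow> p = 0"
proof
  assume h: "sigmaR g t p = 0"
  show "p = 0"
  proof (rule ccontr)
    assume "p \<noteq> 0"
    show False
    proof (cases "degree p = 0")
      case True
      then have "p = [:coeff p 0:]" by (metis degree_0_id)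
      with h \<open>p \<noteq> 0\<close> show False by (metis sigmaR_const)
    next
      case False
      then have "degree (sigmaR g t p) \<noteq> 0" using sigmaR_degree[OF assms] by simp
      with h show False by simp
    qed
  qed
qed simp

section \<open>delta on R[x]\<close>

definition Dn :: "'a::idom \<Rightarrow> 'a \<Rightarrow> 'a poly \<Rightarrow> nat \<Rightarrow> 'a poly" where
  "Dn g t dx n = (\<Sum>i<n. [:t, g:] ^ i * dx * [:0, 1:] ^ (n - 1 - i))"

lemma deltaR_Dn: "deltaR g t dx p = (\<Sum>n\<le>degree p. smult (coeff p n) (Dn g t dx n))"
  by (simp add: deltaR_def Dn_def)

lemma deltaR_bound:
  assumes "degree p \<le> N"
  shows "deltaR g t dx p = (\<Sum>n\<le>N. smult (coeff p n) (Dn g t dx n))"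
  unfolding deltaR_Dn
  by (rule sum.mono_neutral_left) (use assms in \<open>auto simp: coeff_eq_0\<close>)

lemma Dn_0 [simp]: "Dn g t dx 0 = 0"
  by (simp add: Dn_def)

lemma Dn_Suc: "Dn g t dx (Suc n) = [:t, g:] * Dn g t dx n + dx * [:0, 1:] ^ n"
proof -
  have "Dn g t dx (Suc n) = (\<Sum>i<Suc n. [:t, g:] ^ i * dx * [:0, 1:] ^ (n - i))"
    by (simp add: Dn_def)
  also have "\<dots> = [:t, g:] ^ 0 * dx * [:0, 1:] ^ (n - 0) +
      (\<Sum>i<n. [:t, g:] ^ Suc i * dx * [:0, 1:] ^ (n - Suc i))"
    by (rule sum.lessThan_Suc_shift)
  also have "(\<Sum>i<n. [:t, g:] ^ Suc i * dx * [:0, 1:] ^ (n - Suc i)) = [:t, g:] * Dn g t dx n"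
    unfolding Dn_def sum_distrib_left power_Suc mult.assoc
    by (rule sum.cong) (simp_all add: diff_diff_left)
  finally show ?thesis by (simp add: add.commute)
qed

lemma deltaR_add: "deltaR g t dx (p + q) = deltaR g t dx p + deltaR g t dx q"
proof -
  define N where "N = max (degree p) (degree q)"
  have "degree (p + q) \<le> N" "degree p \<le> N" "degree q \<le> N"
    unfolding N_def by (auto intro: degree_add_le)
  then show ?thesis
    by (simp add: deltaR_bound[of _ N] smult_add_left sum.distrib)
qed

lemma smult_sum_right: "smult c (\<Sum>i\<in>A. f i) = (\<Sum>i\<in>A. smult c (f i))"
  by (induction A rule: infinite_finite_induct) (auto simp: smult_add_right)

lemma deltaR_smult: "deltaR g t dx (smult c p) = smult c (deltaR g t dx p)"
proof -
  have "degree (smult c p) \<le> degree p" by (rule degree_smult_le)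
  then show ?thesis
    by (simp add: deltaR_bound[of _ "degree p"] deltaR_Dn smult_sum_right)
qed

lemma deltaR_const [simp]: "deltaR g t dx [:c:] = 0"
  by (simp add: deltaR_Dn)

lemma deltaR_0 [simp]: "deltaR g t dx 0 = 0"
  by (simp add: deltaR_Dn)

lemma deltaR_1 [simp]: "deltaR g t dx 1 = 0"
  using deltaR_const[of g t dx 1] by (simp add: one_pCons)

lemma deltaR_uminus: "deltaR g t dx (- p) = - deltaR g t dx p"
  using deltaR_smult[of g t dx "-1" p] by simp

lemma deltaR_diff: "deltaR g t dx (p - q) = deltaR g t dx p - deltaR g t dx q"
  using deltaR_add[of g t dx p "-q"] by (simp add: deltaR_uminus)

lemma smult_aux: "smult c (A * D + dx * [:0, 1:] ^ n) = A * smult c D + dx * monom c n"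
  by (simp add: monom_altdef smult_add_right)

lemma deltaR_pCons0: "deltaR g t dx (pCons 0 r) = [:t, g:] * deltaR g t dx r + dx * r"
proof -
  have d: "degree (pCons 0 r) \<le> Suc (degree r)" by (simp add: degree_pCons_le)
  have "deltaR g t dx (pCons 0 r) = (\<Sum>n\<le>Suc (degree r). smult (coeff (pCons 0 r) n) (Dn g t dx n))"
    by (rule deltaR_bound[OF d])
  also have "\<dots> = (\<Sum>n\<le>degree r. smult (coeff r n) (Dn g t dx (Suc n)))"
    by (subst sum.atMost_Suc_shift) simp
  also have "\<dots> = (\<Sum>n\<le>degree r. [:t, g:] * smult (coeff r n) (Dn g t dx n)) +
      (\<Sum>n\<le>degree r. dx * monom (coeff r n) n)"
    by (simp only: Dn_Suc smult_aux sum.distrib)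
  also have "\<dots> = [:t, g:] * deltaR g t dx r + dx * r"
    by (simp only: deltaR_Dn sum_distrib_left[symmetric] poly_as_sum_of_monoms)
  finally show ?thesis .
qed

lemma deltaR_leibniz:
  "deltaR g t dx (p * q) = sigmaR g t p * deltaR g t dx q + deltaR g t dx p * q"
proof (induction p)
  case 0 then show ?case by simp
next
  case (pCons a p)
  have "pCons a p * q = smult a q + pCons 0 (p * q)" by simp
  then have "deltaR g t dx (pCons a p * q) = smult a (deltaR g t dx q) + ([:t, g:] * deltaR g t dx (p * q) + dx * (p * q))"
    by (simp only: deltaR_add deltaR_smult deltaR_pCons0)
  also have "\<dots> = smult a (deltaR g t dx q) + [:t, g:] * (sigmaR g t p * deltaR g t dx q + deltaR g t dx p * q) + dx * (p * q)"
    using pCons.IH by simp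
  also have "pCons a p = [:a:] + pCons 0 p" by simp
  then have "sigmaR g t (pCons a p) = [:a:] + [:t, g:] * sigmaR g t p"
    by (simp add: sigmaR_def pcompose_pCons)
  moreover have "deltaR g t dx (pCons a p) = [:t, g:] * deltaR g t dx p + dx * p"
    using deltaR_add[of g t dx "[:a:]" "pCons 0 p"] deltaR_pCons0[of g t dx p] by simp
  ultimately show ?case by (simp add: algebra_simps)
qed

lemma deltaR_comm:
  "deltaR g t dx p * (sigmaR g t q - q) = deltaR g t dx q * (sigmaR g t p - p)"
  using deltaR_leibniz[of g t dx p q] deltaR_leibniz[of g t dx q p]
  by (simp add: algebra_simps)


context
  fixes g t :: "'a::idom" and dx :: "'a poly"
  assumes g0: "g \<noteq> 0"
begin

abbreviation "sR \<equiv> sigmaR g t"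
abbreviation "dR \<equiv> deltaR g t dx"
abbreviation "sK \<equiv> sigmaK g t"
abbreviation "dK \<equiv> deltaK g t dx"

lemma sR_nz: "b \<noteq> 0 \<Longrightarrow> sR b \<noteq> 0"
  using sigmaR_eq_0_iff[OF g0] by blast

lemma sigmaK_Fract:
  assumes b: "b \<noteq> 0"
  shows "sK (Fract a b) = Fract (sR a) (sR b)"
  unfolding sigmaK_def
proof (rule someI2[where a = "Fract (sR a) (sR b)"])
  show "\<exists>a' b'. b' \<noteq> 0 \<and> Fract a b = Fract a' b' \<and> Fract (sR a) (sR b) = Fract (sR a') (sR b')"
    using b by blast
next
  fix r assume "\<exists>a' b'. b' \<noteq> 0 \<and> Fract a b = Fract a' b' \<and> r = Fract (sR a') (sR b')"
  then obtain a' b' where h: "b' \<noteq> 0" "Fract a b = Fract a' b'" "r = Fract (sR a') (sR b')" by blast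
  from h(2) b h(1) have "a * b' = a' * b" by (simp add: eq_fract)
  then have "sR a * sR b' = sR a' * sR b" by (metis sigmaR_mult)
  then show "r = Fract (sR a) (sR b)" using h b sR_nz by (simp add: eq_fract)
qed

definition dF :: "'a poly \<Rightarrow> 'a poly \<Rightarrow> 'a poly fract" where
  "dF a b = Fract (dR a * b - a * dR b) (b * sR b)"

lemma dF_scale:
  assumes b: "b \<noteq> 0" and c: "c \<noteq> 0"
  shows "dF (a * c) (b * c) = dF a b"
proof -
  have bc: "b * c * sR (b * c) \<noteq> 0" "b * sR b \<noteq> 0" using b c sR_nz by auto
  have h1: "dR a * (sR c - c) = dR c * (sR a - a)" by (rule deltaR_comm)
  have h2: "dR b * (sR c - c) = dR c * (sR b - b)" by (rule deltaR_comm)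
  have l1: "dR (a * c) = sR a * dR c + dR a * c" by (rule deltaR_leibniz)
  have l2: "dR (b * c) = sR b * dR c + dR b * c" by (rule deltaR_leibniz)
  have l3: "sR (b * c) = sR b * sR c" by (rule sigmaR_mult)
  have "(dR (a * c) * (b * c) - a * c * dR (b * c)) * (b * sR b) =
        (dR a * b - a * dR b) * (b * c * sR (b * c))"
    unfolding l1 l2 l3 using h1 h2 by algebra
  then show ?thesis unfolding dF_def using bc by (simp add: eq_fract)
qed

lemma dF_welldef:
  assumes "b \<noteq> 0" "b' \<noteq> 0" "Fract a b = Fract a' b'"
  shows "dF a b = dF a' b'"
proof -
  have e: "a * b' = a' * b" using assms by (simp add: eq_fract)
  have "dF a b = dF (a * b') (b * b')" using assms by (simp add: dF_scale)
  also have "\<dots> = dF (a' * b) (b' * b)" by (simp add: e mult.commute)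
  also have "\<dots> = dF a' b'" using assms by (simp add: dF_scale)
  finally show ?thesis .
qed

lemma deltaK_Fract:
  assumes b: "b \<noteq> 0"
  shows "dK (Fract a b) = dF a b"
  unfolding deltaK_def dF_def[symmetric]
proof (rule someI2[where a = "dF a b"])
  show "\<exists>a' b'. b' \<noteq> 0 \<and> Fract a b = Fract a' b' \<and> dF a b = dF a' b'"
    using b by blast
next
  fix r assume "\<exists>a' b'. b' \<noteq> 0 \<and> Fract a b = Fract a' b' \<and> r = dF a' b'"
  then obtain a' b' where h: "b' \<noteq> 0" "Fract a b = Fract a' b'" "r = dF a' b'" by blast
  then show "r = dF a b" using dF_welldef[OF b h(1) h(2)] by simp
qed

lemma sK_to_fract [simp]: "sK (to_fract p) = to_fract (sR p)"
  by (simp add: to_fract_def sigmaK_Fract)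

lemma dK_to_fract [simp]: "dK (to_fract p) = to_fract (dR p)"
  by (simp add: to_fract_def deltaK_Fract dF_def)

lemma sK_0 [simp]: "sK 0 = 0"
  using sK_to_fract[of 0] by simp
lemma sK_1 [simp]: "sK 1 = 1"
  using sK_to_fract[of 1] by simp
lemma dK_0 [simp]: "dK 0 = 0"
  using dK_to_fract[of 0] by simp

lemma sK_add: "sK (x + y) = sK x + sK y"
proof -
  obtain a b where x: "x = Fract a b" "b \<noteq> 0" by (cases x)
  obtain c d where y: "y = Fract c d" "d \<noteq> 0" by (cases y)
  show ?thesis using x y sR_nz by (simp add: sigmaK_Fract sigmaR_add sigmaR_mult)
qed

lemma sK_mult: "sK (x * y) = sK x * sK y"
proof -
  obtain a b where x: "x = Fract a b" "b \<noteq> 0" by (cases x)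
  obtain c d where y: "y = Fract c d" "d \<noteq> 0" by (cases y)
  show ?thesis using x y sR_nz by (simp add: sigmaK_Fract sigmaR_mult)
qed

lemma sK_uminus: "sK (- x) = - sK x"
proof -
  have "sK x + sK (- x) = 0" using sK_add[of x "-x"] by simp
  then show ?thesis by (metis add_eq_0_iff)
qed

lemma sK_eq_0: "sK x = 0 \<longleftrightarrow> x = 0"
proof -
  obtain a b where x: "x = Fract a b" "b \<noteq> 0" by (cases x)
  show ?thesis using x sR_nz sigmaR_eq_0_iff[OF g0] by (simp add: sigmaK_Fract eq_fract Zero_fract_def)
qed

lemma sK_inj: "inj sK"
proof (rule injI)
  fix x y assume "sK x = sK y"
  moreover have "sK (x - y) = sK x - sK y" by (simp only: diff_conv_add_uminus sK_add sK_uminus)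
  ultimately have "sK (x - y) = 0" by simp
  then show "x = y" by (simp add: sK_eq_0)
qed

lemma dK_add: "dK (x + y) = dK x + dK y"
proof -
  obtain a b where x: "x = Fract a b" "b \<noteq> 0" by (cases x)
  obtain c d where y: "y = Fract c d" "d \<noteq> 0" by (cases y)
  have nz: "b * d * sR (b * d) \<noteq> 0" "b * sR b * (d * sR d) \<noteq> 0" using x y sR_nz by auto
  have h1: "dR a * (sR d - d) = dR d * (sR a - a)" by (rule deltaR_comm)
  have h2: "dR c * (sR b - b) = dR b * (sR c - c)" by (rule deltaR_comm)
  have h3: "dR b * (sR d - d) = dR d * (sR b - b)" by (rule deltaR_comm)
  have l: "dR (a * d + c * b) = sR a * dR d + dR a * d + (sR c * dR b + dR c * b)"
    by (simp add: deltaR_add deltaR_leibniz)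
  have l2: "dR (b * d) = sR b * dR d + dR b * d" by (rule deltaR_leibniz)
  have l3: "sR (b * d) = sR b * sR d" by (rule sigmaR_mult)
  have "(dR (a * d + c * b) * (b * d) - (a * d + c * b) * dR (b * d)) * (b * sR b * (d * sR d)) =
    ((dR a * b - a * dR b) * (d * sR d) + (dR c * d - c * dR d) * (b * sR b)) * (b * d * sR (b * d))"
    unfolding l l2 l3 using h1 h2 h3 by algebra
  then show ?thesis using x y nz sR_nz
    by (simp add: deltaK_Fract dF_def eq_fract)
qed

lemma dK_mult: "dK (x * y) = sK x * dK y + dK x * y"
proof -
  obtain a b where x: "x = Fract a b" "b \<noteq> 0" by (cases x)
  obtain c d where y: "y = Fract c d" "d \<noteq> 0" by (cases y)
  have h1: "dR a * (sR d - d) = dR d * (sR a - a)" by (rule deltaR_comm)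
  have h2: "dR c * (sR b - b) = dR b * (sR c - c)" by (rule deltaR_comm)
  have h3: "dR b * (sR d - d) = dR d * (sR b - b)" by (rule deltaR_comm)
  have h4: "dR a * (sR c - c) = dR c * (sR a - a)" by (rule deltaR_comm)
  have l: "dR (a * c) = sR a * dR c + dR a * c" by (rule deltaR_leibniz)
  have l2: "dR (b * d) = sR b * dR d + dR b * d" by (rule deltaR_leibniz)
  have l3: "sR (b * d) = sR b * sR d" by (rule sigmaR_mult)
  have nz: "b * d * sR (b * d) \<noteq> 0" "sR b * (d * sR d) \<noteq> 0" "b * sR b * d \<noteq> 0"
    using x y sR_nz by auto
  have "(dR (a * c) * (b * d) - a * c * dR (b * d)) *
      (sR b * (d * sR d) * (b * sR b * d)) =
    ((sR a * (dR c * d - c * dR d)) * (b * sR b * d) + ((dR a * b - a * dR b) * c) * (sR b * (d * sR d))) *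
      (b * d * sR (b * d))"
    unfolding l l2 l3 using h1 h2 h3 h4 by algebra
  then show ?thesis using x y nz sR_nz
    by (simp add: deltaK_Fract dF_def sigmaK_Fract eq_fract)
qed

end


context
  fixes g t :: "'a::idom" and dx :: "'a poly"
  assumes g0: "g \<noteq> 0"
begin

abbreviation "lD \<equiv> lmulD g t dx"
abbreviation "om \<equiv> ore_mult g t dx"

lemma coeff_lmulD:
  "coeff (lD P) n = (if n = 0 then 0 else sigmaK g t (coeff P (n - 1))) + deltaK g t dx (coeff P n)"
  unfolding lmulD_def coeff_add
  by (simp add: coeff_pCons' coeff_map_poly sK_0[OF g0] dK_0[OF g0])

lemma lmulD_add: "lD (P + Q) = lD P + lD Q"
  by (rule poly_eqI) (simp add: coeff_lmulD sK_add[OF g0] dK_add[OF g0] algebra_simps)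

lemma lmulD_0 [simp]: "lD 0 = 0"
  by (rule poly_eqI) (simp add: coeff_lmulD sK_0[OF g0] dK_0[OF g0])

lemma lmulD_smult: "lD (smult a P) = smult (sigmaK g t a) (lD P) + smult (deltaK g t dx a) P"
  by (rule poly_eqI) (simp add: coeff_lmulD sK_mult[OF g0] dK_mult[OF g0] algebra_simps)

lemma lmulD_monom: "lD (monom c i) = monom (sigmaK g t c) (Suc i) + monom (deltaK g t dx c) i"
  by (rule poly_eqI) (auto simp: coeff_lmulD coeff_monom sK_0[OF g0] dK_0[OF g0])

lemma lmulD_sum: "lD (\<Sum>i\<in>A. f i) = (\<Sum>i\<in>A. lD (f i))"
  by (induction A rule: infinite_finite_induct) (simp_all add: lmulD_add)

lemma ore_mult_bound:
  assumes "degree Q \<le> N"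
  shows "om Q L = (\<Sum>i\<le>N. smult (coeff Q i) ((lD ^^ i) L))"
  unfolding ore_mult_def
  by (rule sum.mono_neutral_left) (use assms in \<open>auto simp: coeff_eq_0\<close>)

lemma ore_mult_add: "om (P + Q) L = om P L + om Q L"
proof -
  define N where "N = max (degree P) (degree Q)"
  have "degree (P + Q) \<le> N" "degree P \<le> N" "degree Q \<le> N"
    unfolding N_def by (auto intro: degree_add_le)
  then show ?thesis
    by (simp add: ore_mult_bound[of _ N] smult_add_left sum.distrib)
qed

lemma ore_mult_0 [simp]: "om 0 L = 0"
  by (simp add: ore_mult_def)

lemma ore_mult_smult: "om (smult c Q) L = smult c (om Q L)"
proof -
  have "degree (smult c Q) \<le> degree Q" by (rule degree_smult_le)
  then show ?thesis
    by (simp add: ore_mult_bound[of _ "degree Q"] ore_mult_def smult_sum_right)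
qed

lemma ore_mult_monom: "om (monom c i) L = smult c ((lD ^^ i) L)"
proof -
  have "degree (monom c i) \<le> i" by (rule degree_monom_le)
  then have "om (monom c i) L = (\<Sum>n\<le>i. smult (coeff (monom c i) n) ((lD ^^ n) L))"
    by (rule ore_mult_bound)
  also have "\<dots> = smult c ((lD ^^ i) L)"
    by (subst sum.remove[of _ i]) (auto simp: coeff_monom intro!: sum.neutral)
  finally show ?thesis .
qed

lemma ore_mult_sum: "om (\<Sum>i\<in>A. f i) L = (\<Sum>i\<in>A. om (f i) L)"
  by (induction A rule: infinite_finite_induct) (simp_all add: ore_mult_add)

lemma lmulD_ore: "lD (om Q L) = om (lD Q) L"
proof -
  have "lD (om Q L) = lD (\<Sum>i\<le>degree Q. om (monom (coeff Q i) i) L)"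
    by (simp add: ore_mult_sum[symmetric] poly_as_sum_of_monoms)
  also have "\<dots> = (\<Sum>i\<le>degree Q. om (lD (monom (coeff Q i) i)) L)"
    unfolding lmulD_sum
    by (rule sum.cong) (simp_all add: ore_mult_monom lmulD_smult lmulD_monom ore_mult_add)
  also have "\<dots> = om (lD Q) L"
    by (simp add: ore_mult_sum[symmetric] lmulD_sum[symmetric] poly_as_sum_of_monoms)
  finally show ?thesis .
qed

lemma degree_lmulD:
  assumes "P \<noteq> 0"
  shows "degree (lD P) = Suc (degree P)" "lead_coeff (lD P) = sigmaK g t (lead_coeff P)"
proof -
  have c: "coeff (lD P) (Suc (degree P)) = sigmaK g t (lead_coeff P)"
    by (simp add: coeff_lmulD coeff_eq_0 dK_0[OF g0])
  have "sigmaK g t (lead_coeff P) \<noteq> 0" using assms sK_eq_0[OF g0] by simp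
  then have "Suc (degree P) \<le> degree (lD P)" using c by (intro le_degree) simp
  moreover have "degree (lD P) \<le> Suc (degree P)"
    by (rule degree_le) (auto simp: coeff_lmulD coeff_eq_0 sK_0[OF g0] dK_0[OF g0])
  ultimately show d: "degree (lD P) = Suc (degree P)" by simp
  show "lead_coeff (lD P) = sigmaK g t (lead_coeff P)" unfolding d by (rule c)
qed

lemma in_RxD_lmulD:
  assumes "in_RxD P"
  shows "in_RxD (lD P)"
  unfolding in_RxD_def
proof
  fix n
  have "\<And>i. \<exists>p. coeff P i = to_fract p" using assms unfolding in_RxD_def by auto
  then obtain p1 p2 where "coeff P (n - 1) = to_fract p1" "coeff P n = to_fract p2" by metis
  then have "coeff (lD P) n = to_fract ((if n = 0 then 0 else sigmaR g t p1) + deltaR g t dx p2)"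
    by (simp add: coeff_lmulD sK_to_fract[OF g0] dK_to_fract[OF g0])
  then show "coeff (lD P) n \<in> range to_fract" by (simp only: rangeI)
qed

lemma cont_lmulD: "P \<in> cont g t dx L \<Longrightarrow> lD P \<in> cont g t dx L"
  unfolding cont_def using in_RxD_lmulD lmulD_ore by blast

lemma cont_add: "P \<in> cont g t dx L \<Longrightarrow> Q \<in> cont g t dx L \<Longrightarrow> P + Q \<in> cont g t dx L"
  unfolding cont_def in_RxD_def
  by (auto simp: ore_mult_add intro!: exI[of _ "_ + _"]) (metis rangeE rangeI to_fract_add)

lemma cont_smult: "P \<in> cont g t dx L \<Longrightarrow> smult (to_fract c) P \<in> cont g t dx L"
  unfolding cont_def in_RxD_def
  by (auto simp: ore_mult_smult[symmetric]) (metis rangeE rangeI to_fract_mult)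

end


lemma funpow_sigmaR_mult: "(sigmaR h u ^^ k) (p * q) = (sigmaR h u ^^ k) p * (sigmaR h u ^^ k) q"
  by (induction k) (simp_all add: sigmaR_mult)
lemma funpow_sigmaR_const [simp]: "(sigmaR h u ^^ k) [:c:] = [:c:]"
  by (induction k) simp_all
lemma funpow_sigmaR_smult: "(sigmaR h u ^^ k) (smult c p) = smult c ((sigmaR h u ^^ k) p)"
  by (induction k) (simp_all add: sigmaR_smult)
lemma funpow_sigmaR_degree:
  fixes h u :: "'a::idom"
  shows "h \<noteq> 0 \<Longrightarrow> degree ((sigmaR h u ^^ k) p) = degree p"
  by (induction k) (simp_all add: sigmaR_degree)
lemma funpow_sigmaR_eq_0:
  fixes h u :: "'a::idom"
  shows "h \<noteq> 0 \<Longrightarrow> (sigmaR h u ^^ k) p = 0 \<longleftrightarrow> p = 0"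
  by (induction k) (simp_all add: sigmaR_eq_0_iff)

context
  fixes g t g' :: "'a::idom" and dx :: "'a poly"
  assumes gi: "g * g' = 1"
begin

lemma g0: "g \<noteq> 0" using gi by auto
lemma g'0: "g' \<noteq> 0" using gi by auto

abbreviation "sRi \<equiv> sigmaR g' (- (g' * t))"

lemma sR_sRi: "sigmaR g t (sRi p) = p"
proof -
  have "pcompose [:- (g' * t), g':] [:t, g:] = [:0, 1:]"
    using gi by (simp add: pcompose_pCons algebra_simps)
  then show ?thesis unfolding sigmaR_def by (simp add: pcompose_assoc[symmetric])
qed

lemma inv_sK_sK: "inv (sigmaK g t) (sigmaK g t x) = x"
  using sK_inj[OF g0] by (simp add: inv_f_f)

lemma inv_sK_to_fract: "inv (sigmaK g t) (to_fract p) = to_fract (sRi p)"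
proof -
  have "to_fract p = sigmaK g t (to_fract (sRi p))" by (simp add: sK_to_fract[OF g0] sR_sRi)
  then show ?thesis by (simp add: inv_sK_sK)
qed

lemma funpow_sK_to_fract: "(sigmaK g t ^^ k) (to_fract p) = to_fract ((sigmaR g t ^^ k) p)"
  by (induction k) (simp_all add: sK_to_fract[OF g0])

lemma funpow_inv_sK_to_fract: "(inv (sigmaK g t) ^^ k) (to_fract p) = to_fract ((sRi ^^ k) p)"
  by (induction k) (simp_all add: inv_sK_to_fract)

lemma inv_funpow:
  "(inv (sigmaK g t) ^^ a) ((sigmaK g t ^^ b) x) =
     (if a \<le> b then (sigmaK g t ^^ (b - a)) x else (inv (sigmaK g t) ^^ (a - b)) x)"
proof (induction a arbitrary: b)
  case 0 then show ?case by simp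
next
  case (Suc a)
  show ?case
  proof (cases "a < b")
    case True
    then have "(sigmaK g t ^^ (b - a)) x = sigmaK g t ((sigmaK g t ^^ (b - Suc a)) x)"
      by (metis Suc_diff_Suc funpow.simps(2) o_apply)
    then show ?thesis using Suc True by (simp add: inv_sK_sK)
  next
    case False
    then show ?thesis using Suc
      by (cases "a = b") (simp_all add: Suc_diff_le)
  qed
qed

definition sigZ :: "int \<Rightarrow> 'a poly \<Rightarrow> 'a poly" where
  "sigZ n p = (if 0 \<le> n then (sigmaR g t ^^ nat n) p else (sRi ^^ nat (- n)) p)"

lemma sigma_pow_to_fract: "sigma_pow g t n (to_fract p) = to_fract (sigZ n p)"
  by (simp add: sigma_pow_def sigZ_def funpow_sK_to_fract funpow_inv_sK_to_fract)

lemma sigma_pow_shift: "sigma_pow g t n ((sigmaK g t ^^ m) x) = sigma_pow g t (n + int m) x"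
proof (cases "0 \<le> n")
  case True
  then have "nat (n + int m) = nat n + m" by simp
  then show ?thesis using True by (simp add: sigma_pow_def funpow_add)
next
  case False
  moreover have "nat (- n) \<le> m \<Longrightarrow> m - nat (- n) = nat (n + int m)" using False by linarith
  moreover have "\<not> nat (- n) \<le> m \<Longrightarrow> nat (- n) - m = nat (- (n + int m))" using False by linarith
  ultimately show ?thesis by (auto simp: sigma_pow_def inv_funpow)
qed

lemma sigZ_mult: "sigZ n (p * q) = sigZ n p * sigZ n q"
  by (simp add: sigZ_def funpow_sigmaR_mult)
lemma sigZ_smult: "sigZ n (smult c p) = smult c (sigZ n p)"
  by (simp add: sigZ_def funpow_sigmaR_smult)
lemma sigZ_eq_0: "sigZ n p = 0 \<longleftrightarrow> p = 0"
  using g0 g'0 by (simp add: sigZ_def funpow_sigmaR_eq_0)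

end


lemma shift_op:
  fixes g t :: "'a::idom"
  assumes g0: "g \<noteq> 0" and P: "P \<in> cont g t dx L" "P \<noteq> 0"
  shows "(lmulD g t dx ^^ m) P \<in> cont g t dx L \<and> (lmulD g t dx ^^ m) P \<noteq> 0 \<and>
    degree ((lmulD g t dx ^^ m) P) = degree P + m \<and>
    lead_coeff ((lmulD g t dx ^^ m) P) = (sigmaK g t ^^ m) (lead_coeff P)"
proof (induction m)
  case 0 then show ?case using P by simp
next
  case (Suc m)
  let ?X = "(lmulD g t dx ^^ m) P"
  have X: "?X \<in> cont g t dx L" "?X \<noteq> 0" using Suc by auto
  have d: "degree (lmulD g t dx ?X) = Suc (degree ?X)" "lead_coeff (lmulD g t dx ?X) = sigmaK g t (lead_coeff ?X)"
    using degree_lmulD[OF g0 X(2)] by auto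
  have "lead_coeff ?X \<noteq> 0" using X(2) by simp
  then have "lead_coeff (lmulD g t dx ?X) \<noteq> 0" using d(2) sK_eq_0[OF g0] by simp
  then have "lmulD g t dx ?X \<noteq> 0" by auto
  moreover have L1: "lead_coeff ?X = (sigmaK g t ^^ m) (lead_coeff P)" using Suc by blast
  have "lead_coeff (lmulD g t dx ?X) = (sigmaK g t ^^ Suc m) (lead_coeff P)"
    unfolding d(2) L1 by simp
  moreover have "degree (lmulD g t dx ?X) = degree P + Suc m" using d(1) Suc by simp
  ultimately show ?case using cont_lmulD[OF g0 X(1)] by simp
qed

theorem mainTheorem2:
  fixes \<gamma> \<tau> :: "'a::pid" and dx :: "'a poly"
    and L S :: "'a poly fract poly" and k :: nat and s :: "'a poly"
  assumes unit_gamma: "\<gamma> dvd 1"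
    and deg_dx: "degree dx \<le> 1"
    and L_RxD: "in_RxD L"
    and L_order: "degree L > 0"
    and desing_exists: "\<exists>T \<in> Mk \<gamma> \<tau> dx L k. desingularized \<gamma> \<tau> dx L T"
    and s_in: "s \<in> coeff_ideal \<gamma> \<tau> dx L k"
    and s_nz: "s \<noteq> 0"
    and s_min: "\<forall>t \<in> coeff_ideal \<gamma> \<tau> dx L k. t \<noteq> 0 \<longrightarrow> degree s \<le> degree t"
    and S_in: "S \<in> Mk \<gamma> \<tau> dx L k"
    and S_lc: "lead_coeff S = to_fract s"
  shows "desingularized \<gamma> \<tau> dx L S"
proof -
  obtain g' where gi: "\<gamma> * g' = 1" using unit_gamma by (auto simp: dvd_def)
  have g0: "\<gamma> \<noteq> 0" using gi by auto
  have g'0: "g' \<noteq> 0" using gi by auto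
  let ?sK = "sigmaK \<gamma> \<tau>"
  let ?lD = "lmulD \<gamma> \<tau> dx"
  let ?sR = "sigmaR \<gamma> \<tau>"
  define r where "r = degree L"
  have L0: "L \<noteq> 0" using L_order by auto
  from desing_exists obtain T where TM: "T \<in> Mk \<gamma> \<tau> dx L k" and Td: "desingularized \<gamma> \<tau> dx L T"
    by blast
  define jT where "jT = degree T"
  have jTk: "jT \<le> k" using TM unfolding Mk_def jT_def by simp
  have T0: "T \<noteq> 0" and Tc: "T \<in> cont \<gamma> \<tau> dx L" using Td unfolding desingularized_def by auto
  define T' where "T' = (?lD ^^ (k - jT)) T"
  have T'prop: "T' \<in> cont \<gamma> \<tau> dx L" "T' \<noteq> 0" "degree T' = k"
    "lead_coeff T' = (?sK ^^ (k - jT)) (lead_coeff T)"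
    using shift_op[OF g0 Tc T0, of "k - jT"] jTk unfolding T'_def jT_def by auto
  have "lead_coeff T' \<in> range to_fract" using T'prop(1) unfolding cont_def in_RxD_def by auto
  then obtain t where t: "lead_coeff T' = to_fract t" by auto
  have t0: "t \<noteq> 0" using t T'prop(2) by auto
  define j where "j = degree S"
  have jk: "j \<le> k" using S_in unfolding Mk_def j_def by simp
  have S0: "S \<noteq> 0" using S_lc s_nz by auto
  have Sc: "S \<in> cont \<gamma> \<tau> dx L" using S_in unfolding Mk_def by simp
  define S' where "S' = (?lD ^^ (k - j)) S"
  define s' where "s' = (?sR ^^ (k - j)) s"
  have S'prop: "S' \<in> cont \<gamma> \<tau> dx L" "S' \<noteq> 0" "degree S' = k"
    "lead_coeff S' = (?sK ^^ (k - j)) (lead_coeff S)"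
    using shift_op[OF g0 Sc S0, of "k - j"] jk unfolding S'_def j_def by auto
  have s'lc: "lead_coeff S' = to_fract s'"
    unfolding S'prop(4) S_lc s'_def by (rule funpow_sK_to_fract[OF gi])
  have degs': "degree s' = degree s" unfolding s'_def using g0 by (rule funpow_sigmaR_degree)
  have s'0: "s' \<noteq> 0" unfolding s'_def using g0 s_nz by (simp add: funpow_sigmaR_eq_0)
  \<comment> \<open>pseudo-division inside the coefficient ideal\<close>
  have PD: "\<exists>\<alpha> q. \<alpha> \<noteq> 0 \<and> smult \<alpha> t = s' * q"
  proof -
    define r0 where "r0 = pseudo_mod t s'"
    obtain \<alpha> q where aq: "\<alpha> \<noteq> 0" "smult \<alpha> t = s' * q + r0"
      using pseudo_mod(1)[OF s'0, of t] unfolding r0_def by blast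
    have rdeg: "r0 = 0 \<or> degree r0 < degree s'"
      using pseudo_mod(2)[OF s'0, of t] unfolding r0_def by blast
    define R where "R = smult (to_fract [:\<alpha>:]) T' + smult (to_fract (- q)) S'"
    have Rc: "R \<in> cont \<gamma> \<tau> dx L" unfolding R_def
      by (intro cont_add[OF g0] cont_smult[OF g0] T'prop(1) S'prop(1))
    have "degree R \<le> k" unfolding R_def
      using T'prop(3) S'prop(3) degree_smult_le
      by (metis (no_types, lifting) degree_add_le order_trans)
    then have RM: "R \<in> Mk \<gamma> \<tau> dx L k" using Rc unfolding Mk_def by simp
    have "coeff R k = to_fract [:\<alpha>:] * lead_coeff T' + to_fract (- q) * lead_coeff S'"
      unfolding R_def using T'prop(3) S'prop(3) by simp
    also have "\<dots> = to_fract ([:\<alpha>:] * t - s' * q)" unfolding t s'lc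
      by (simp only: to_fract_diff to_fract_mult to_fract_uminus) (simp add: algebra_simps del: mult_pCons_left mult_pCons_right)
    also have "\<dots> = to_fract r0" using aq(2) by simp
    finally have "to_fract r0 = coeff R k" by simp
    then have "r0 \<in> coeff_ideal \<gamma> \<tau> dx L k" using RM unfolding coeff_ideal_def by blast
    then have "r0 = 0"
      using s_min rdeg degs' by force
    then show ?thesis using aq by auto
  qed
  then obtain \<alpha> q where aq: "\<alpha> \<noteq> 0" "smult \<alpha> t = s' * q" by blast
  show ?thesis
    unfolding desingularized_def
  proof (intro conjI allI impI)
    show "S \<noteq> 0" by (rule S0)
    show "S \<in> cont \<gamma> \<tau> dx L" by (rule Sc)
    fix c Ps e assume lf: "lc_factorization L c Ps e"
    have finPs: "finite Ps" and irrPs: "\<forall>p\<in>Ps. irreducible p \<and> degree p > 0 \<and> e p > 0"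
      and copPs: "\<forall>p\<in>Ps. \<forall>q\<in>Ps. p \<noteq> q \<longrightarrow> (\<forall>g. g dvd p \<longrightarrow> g dvd q \<longrightarrow> g dvd 1)"
      and lcL: "lead_coeff L = to_fract ([:c:] * (\<Prod>p\<in>Ps. p ^ e p))"
      using lf unfolding lc_factorization_def by auto
    have prPs: "\<forall>p\<in>Ps. prime_elem p \<and> degree p > 0"
      using irrPs irr_prime_poly by blast
    have copPs': "\<forall>p\<in>Ps. \<forall>q\<in>Ps. p \<noteq> q \<longrightarrow> cop p q" using copPs unfolding cop_def by blast
    have pnz: "(\<Prod>p\<in>Ps. p ^ m p) \<noteq> 0" for m
      using prod_nonzero[OF finPs prPs copPs'] by blast
    have c0: "c \<noteq> 0" using lcL L0 by auto
    from Td lf obtain a b kk where b0: "b \<noteq> 0"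
      and Teq: "sigma_pow \<gamma> \<tau> (int (degree L) - int (degree T)) (lead_coeff T) =
             to_fract [:a:] / (to_fract [:b:] * to_fract (\<Prod>p\<in>Ps. p ^ kk p)) * lead_coeff L"
      and Tnr: "\<forall>p\<in>Ps. \<forall>d. d > kk p \<longrightarrow> \<not> removable \<gamma> \<tau> dx L (p ^ d)"
      unfolding desingularized_def by blast
    define Sg where "Sg = sigZ \<gamma> \<tau> g' (int r - int k)"
    define PK where "PK = (\<Prod>p\<in>Ps. p ^ kk p)"
    define PE where "PE = (\<Prod>p\<in>Ps. p ^ e p)"
    have "sigma_pow \<gamma> \<tau> (int (degree L) - int (degree T)) (lead_coeff T) =
        sigma_pow \<gamma> \<tau> (int r - int k) ((?sK ^^ (k - jT)) (lead_coeff T))"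
      unfolding sigma_pow_shift[OF gi] using jTk by (simp add: r_def jT_def)
    also have "\<dots> = to_fract (Sg t)"
      unfolding T'prop(4)[symmetric] t Sg_def by (rule sigma_pow_to_fract[OF gi])
    finally have "to_fract (Sg t) = to_fract [:a:] / (to_fract [:b:] * to_fract PK) * to_fract ([:c:] * PE)"
      using Teq lcL unfolding PK_def PE_def by simp
    moreover have "to_fract [:b:] * to_fract PK \<noteq> 0" using b0 pnz unfolding PK_def by simp
    ultimately have "to_fract (Sg t) * (to_fract [:b:] * to_fract PK) = to_fract [:a:] * to_fract ([:c:] * PE)"
      by (simp add: field_simps)
    then have eqT: "Sg t * ([:b:] * PK) = [:a:] * ([:c:] * PE)"
      by (simp only: to_fract_mult[symmetric] to_fract_eq_iff)
    have Sgt0: "Sg t \<noteq> 0" unfolding Sg_def using gi t0 by (simp add: sigZ_eq_0)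
    have a0: "a \<noteq> 0"
    proof
      assume "a = 0"
      then have "Sg t * ([:b:] * PK) = 0" using eqT by simp
      with Sgt0 b0 pnz show False unfolding PK_def by simp
    qed
    have "smult \<alpha> (Sg t) = Sg s' * Sg q" unfolding Sg_def
      using aq(2) by (metis sigZ_smult[OF gi] sigZ_mult[OF gi])
    then have KEY: "Sg s' * (Sg q * ([:b:] * PK)) = [:\<alpha> * a * c:] * PE"
    proof -
      assume h: "smult \<alpha> (Sg t) = Sg s' * Sg q"
      have "Sg s' * (Sg q * ([:b:] * PK)) = smult \<alpha> (Sg t) * ([:b:] * PK)" using h by (simp add: mult.assoc)
      also have "\<dots> = smult \<alpha> (Sg t * ([:b:] * PK))" by (simp add: mult.commute)
      also have "\<dots> = [:\<alpha> * a * c:] * PE" unfolding eqT by (simp add: ac_simps)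
      finally show ?thesis .
    qed
    have C0: "\<alpha> * a * c \<noteq> 0" using aq(1) a0 c0 by simp
    have "Sg s' dvd [:\<alpha> * a * c:] * PE" using KEY by (metis dvd_triv_left)
    then obtain u f where uf: "u \<noteq> 0" "Sg s' = [:u:] * (\<Prod>p\<in>Ps. p ^ f p)" "\<forall>p\<in>Ps. f p \<le> e p"
      using divisor_form[OF finPs prPs copPs' C0] unfolding PE_def by blast
    define PF where "PF = (\<Prod>p\<in>Ps. p ^ f p)"
    have bound: "kk p \<le> e p - f p" if p: "p \<in> Ps" for p
    proof -
      have "p ^ f p dvd PF" "p ^ kk p dvd PK" unfolding PF_def PK_def using finPs p by auto
      then have "p ^ f p * p ^ kk p dvd PF * PK" by (rule mult_dvd_mono)
      also have "PF * PK dvd [:\<alpha> * a * c:] * PE"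
        unfolding KEY[symmetric] uf(2) PF_def[symmetric]
        by (rule dvdI[where k = "[:u:] * Sg q * [:b:]"]) (simp add: algebra_simps)
      finally have "p ^ (f p + kk p) dvd [:\<alpha> * a * c:] * (\<Prod>p\<in>Ps. p ^ e p)"
        unfolding PE_def by (simp add: power_add)
      then have "f p + kk p \<le> e p" by (rule pow_bound[OF finPs prPs copPs' p C0])
      then show ?thesis by simp
    qed
    define kk' where "kk' = (\<lambda>p. e p - f p)"
    have PEsplit: "PE = PF * (\<Prod>p\<in>Ps. p ^ kk' p)"
      unfolding PE_def PF_def kk'_def prod.distrib[symmetric] power_add[symmetric]
      by (rule prod.cong) (use uf(3) in auto)
    have "sigma_pow \<gamma> \<tau> (int (degree L) - int (degree S)) (lead_coeff S) =
        sigma_pow \<gamma> \<tau> (int r - int k) ((?sK ^^ (k - j)) (to_fract s))"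
      unfolding sigma_pow_shift[OF gi] S_lc using jk by (simp add: r_def j_def)
    also have "\<dots> = to_fract (Sg s')"
      unfolding funpow_sK_to_fract[OF gi] s'_def[symmetric] Sg_def by (rule sigma_pow_to_fract[OF gi])
    also have "\<dots> = to_fract [:u:] / (to_fract [:c:] * to_fract (\<Prod>p\<in>Ps. p ^ kk' p)) * lead_coeff L"
    proof -
      have nz: "to_fract [:c:] * to_fract (\<Prod>p\<in>Ps. p ^ kk' p) \<noteq> 0" using c0 pnz by simp
      show ?thesis unfolding lcL uf(2) PF_def[symmetric] PE_def[symmetric] PEsplit
        by (simp only: to_fract_mult) (use nz in \<open>simp add: field_simps\<close>)
    qed
    finally have eqS: "sigma_pow \<gamma> \<tau> (int (degree L) - int (degree S)) (lead_coeff S) =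
        to_fract [:u:] / (to_fract [:c:] * to_fract (\<Prod>p\<in>Ps. p ^ kk' p)) * lead_coeff L" .
    have nrS: "\<forall>p\<in>Ps. \<forall>d. d > kk' p \<longrightarrow> \<not> removable \<gamma> \<tau> dx L (p ^ d)"
    proof (intro ballI allI impI)
      fix p d assume p: "p \<in> Ps" and d: "d > kk' p"
      then have "d > kk p" using bound[OF p] unfolding kk'_def by simp
      then show "\<not> removable \<gamma> \<tau> dx L (p ^ d)" using Tnr p by blast
    qed
    show "\<exists>a b kk. b \<noteq> 0 \<and>
           sigma_pow \<gamma> \<tau> (int (degree L) - int (degree S)) (lead_coeff S) =
             to_fract [:a:] / (to_fract [:b:] * to_fract (\<Prod>p\<in>Ps. p ^ kk p)) * lead_coeff L \<and>
           (\<forall>p\<in>Ps. \<forall>d. d > kk p \<longrightarrow> \<not> removable \<gamma> \<tau> dx L (p ^ d))"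
      using c0 eqS nrS by blast
  qed
qed


end
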